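(* Let $n$ and $\rho$ be positive integers with $\rho<n$, let $q$ be a prime power with $q\geq n-1$, and let ${\cal C}$ be a linear $[n,n-\rho,\rho+1]_q$ MDS code over $\mathbb{F}_q$. Define the code over graphs $$\mathcal{C}_{{\cal G}_1}=\Big\{G=(V_n,L)\ \Big|\ {\boldsymbol c}_{N_m^{\mathrm{in}}}\in{\cal C}\ \text{for all } m\in[n-\rho],\ \text{and}\ {\boldsymbol c}_{N_\ell^{\mathrm{out}}}\in{\cal C}\ \text{for all } \ell\in[n]\Big\}.$$ Then $\mathcal{C}_{{\cal G}_1}$ is a linear code over graphs over $\mathbb{F}_q$ of dimension $k_{\cal G}=(n-\rho)^2$ (i.e., it contains $q^{(n-\rho)^2}$ graphs), and it is a $\rho$-node-erasure-correcting code.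
   Context: For an integer $n>0$, $[n]=\{0,1,\ldots,n-1\}$. $V_n=\{v_0,\ldots,v_{n-1}\}$. A graph $G=(V_n,L)$ over $\mathbb{F}_q$ is a complete directed graph with self loops, i.e., edge set $V_n\times V_n$, together with a labeling $L:V_n\times V_n\to\mathbb{F}_q$. A code over graphs is a set of such graphs; it is linear if it is closed under $\mathbb{F}_q$-linear combinations of labelings, and its dimension is $\log_q$ of its size. For $i\in[n]$, $N_i^{\mathrm{out}}=\{(v_i,v_j)\mid j\in[n]\}$ and $N_i^{\mathrm{in}}=\{(v_j,v_i)\mid j\in[n]\}$. For a set of edges $U$, ${\boldsymbol c}_U\in\mathbb{F}_q^{|U|}$ is the vector of labels of the edges in $U$ listed in lexicographic order of the edges. A failure of node $i$ is the erasure of the labels of all edges in $N_i^{\mathrm{out}}\cup N_i^{\mathrm{in}}$ (the failed node indices are known). A code over graphs is $\rho$-node-erasure-correcting if for every graph in the code and every set of $\rho$ failed nodes, the erased labels are uniquely determined by the remaining labels (given the code). *)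

theory Defs
  imports Main
begin

text \<open>Vectors of length n over a field are functions nat => 'a vanishing outside [n] = {0..<n}.\<close>

definition vecs :: "nat \<Rightarrow> (nat \<Rightarrow> 'a::field) set" where
  "vecs n = {v. \<forall>i\<ge>n. v i = 0}"

definition linear_code :: "nat \<Rightarrow> (nat \<Rightarrow> 'a::field) set \<Rightarrow> bool" where
  "linear_code n C \<longleftrightarrow> C \<subseteq> vecs n \<and> (\<lambda>_. 0) \<in> C \<and>
     (\<forall>u\<in>C. \<forall>v\<in>C. (\<lambda>i. u i + v i) \<in> C) \<and>
     (\<forall>a. \<forall>u\<in>C. (\<lambda>i. a * u i) \<in> C)"

definition hamming_dist :: "nat \<Rightarrow> (nat \<Rightarrow> 'a) \<Rightarrow> (nat \<Rightarrow> 'a) \<Rightarrow> nat" where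
  "hamming_dist n u v = card {i. i < n \<and> u i \<noteq> v i}"

definition min_distance :: "nat \<Rightarrow> (nat \<Rightarrow> 'a) set \<Rightarrow> nat" where
  "min_distance n C = Min {hamming_dist n u v | u v. u \<in> C \<and> v \<in> C \<and> u \<noteq> v}"

definition lin_code_params :: "nat \<Rightarrow> nat \<Rightarrow> nat \<Rightarrow> (nat \<Rightarrow> 'a::{field,finite}) set \<Rightarrow> bool" where
  "lin_code_params n k d C \<longleftrightarrow> linear_code n C \<and> card C = card (UNIV :: 'a set) ^ k \<and> min_distance n C = d"

definition mds_code :: "nat \<Rightarrow> nat \<Rightarrow> nat \<Rightarrow> (nat \<Rightarrow> 'a::{field,finite}) set \<Rightarrow> bool" where
  "mds_code n k d C \<longleftrightarrow> lin_code_params n k d C \<and> d = n - k + 1"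

text \<open>A graph G = (V_n, L) is represented by its labeling L, L i j = label of edge (v_i, v_j);
  labels are 0 outside [n] x [n].\<close>
definition graphs :: "nat \<Rightarrow> (nat \<Rightarrow> nat \<Rightarrow> 'a::field) set" where
  "graphs n = {L. \<forall>i j. \<not> (i < n \<and> j < n) \<longrightarrow> L i j = 0}"

text \<open>c_{N_i^in}: labels of edges (v_j, v_i), j in [n], in lexicographic order (i.e. by j).\<close>
definition in_vec :: "(nat \<Rightarrow> nat \<Rightarrow> 'a) \<Rightarrow> nat \<Rightarrow> nat \<Rightarrow> 'a" where
  "in_vec L i = (\<lambda>j. L j i)"

text \<open>c_{N_i^out}: labels of edges (v_i, v_j), j in [n].\<close>
definition out_vec :: "(nat \<Rightarrow> nat \<Rightarrow> 'a) \<Rightarrow> nat \<Rightarrow> nat \<Rightarrow> 'a" where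
  "out_vec L i = (\<lambda>j. L i j)"

definition linear_graph_code :: "nat \<Rightarrow> (nat \<Rightarrow> nat \<Rightarrow> 'a::field) set \<Rightarrow> bool" where
  "linear_graph_code n CG \<longleftrightarrow> CG \<subseteq> graphs n \<and> (\<lambda>_ _. 0) \<in> CG \<and>
     (\<forall>L1\<in>CG. \<forall>L2\<in>CG. (\<lambda>i j. L1 i j + L2 i j) \<in> CG) \<and>
     (\<forall>a. \<forall>L\<in>CG. (\<lambda>i j. a * L i j) \<in> CG)"

text \<open>rho-node-erasure-correcting: for every set S of rho failed nodes, two codewords agreeing on
  all edges not incident to a failed node coincide (erased labels uniquely determined).\<close>
definition node_erasure_correcting :: "nat \<Rightarrow> nat \<Rightarrow> (nat \<Rightarrow> nat \<Rightarrow> 'a) set \<Rightarrow> bool" where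
  "node_erasure_correcting n \<rho> CG \<longleftrightarrow>
     (\<forall>S. S \<subseteq> {..<n} \<and> card S = \<rho> \<longrightarrow>
        (\<forall>L1\<in>CG. \<forall>L2\<in>CG.
           (\<forall>i<n. \<forall>j<n. i \<notin> S \<and> j \<notin> S \<longrightarrow> L1 i j = L2 i j) \<longrightarrow> L1 = L2))"

definition code_G1 :: "nat \<Rightarrow> nat \<Rightarrow> (nat \<Rightarrow> 'a::field) set \<Rightarrow> (nat \<Rightarrow> nat \<Rightarrow> 'a) set" where
  "code_G1 n \<rho> C = {L \<in> graphs n. (\<forall>m < n - \<rho>. in_vec L m \<in> C) \<and> (\<forall>l < n. out_vec L l \<in> C)}"

end

theory Submission
  imports Defs "HOL-Library.FuncSet"
begin

lemma mds_agree:
  fixes C :: "(nat \<Rightarrow> 'a::{field,finite}) set"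
  assumes md: "min_distance n C = \<rho> + 1"
    and u: "u \<in> C" and v: "v \<in> C" and K: "K \<subseteq> {..<n}" and cK: "n - \<rho> \<le> card K"
    and agree: "\<forall>i\<in>K. u i = v i"
  shows "u = v"
proof (rule ccontr)
  assume ne: "u \<noteq> v"
  let ?D = "{hamming_dist n u v | u v. u \<in> C \<and> v \<in> C \<and> u \<noteq> v}"
  have "?D \<subseteq> {..n}"
  proof
    fix x assume "x \<in> ?D"
    then obtain a b :: "nat \<Rightarrow> 'a" where "x = hamming_dist n a b" by blast
    hence "x = card {i. i < n \<and> a i \<noteq> b i}" unfolding hamming_dist_def .
    moreover have "card {i. i < n \<and> a i \<noteq> b i} \<le> card {..<n}"
      by (rule card_mono) auto
    ultimately show "x \<in> {..n}" by simp
  qed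
  hence fin: "finite ?D" by (rule finite_subset) simp
  have mem: "hamming_dist n u v \<in> ?D" using u v ne by blast
  have "Min ?D \<le> hamming_dist n u v" using fin mem by (rule Min_le)
  moreover have "hamming_dist n u v \<le> card ({..<n} - K)"
    unfolding hamming_dist_def by (rule card_mono) (use agree in auto)
  moreover have "card ({..<n} - K) = n - card K"
    using K by (simp add: card_Diff_subset finite_subset)
  ultimately show False using md cK unfolding min_distance_def by linarith
qed

lemma card_vecs_PiE:
  "card (PiE {..<k} (\<lambda>_. UNIV :: ('a::finite) set)) = card (UNIV :: 'a set) ^ k"
  by (simp add: card_PiE)

lemma mds_surj:
  fixes C :: "(nat \<Rightarrow> 'a::{field,finite}) set"
  assumes md: "min_distance n C = \<rho> + 1" and cC: "card C = card (UNIV :: 'a set) ^ (n - \<rho>)"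
    and le: "\<rho> < n"
  shows "\<exists>c\<in>C. \<forall>i<n - \<rho>. c i = w i"
proof -
  define k where "k = n - \<rho>"
  define P where "P = PiE {..<k} (\<lambda>_. UNIV :: 'a set)"
  define r where "r c = restrict c {..<k}" for c :: "nat \<Rightarrow> 'a"
  have kK: "{..<k} \<subseteq> {..<n}" unfolding k_def by auto
  have cK: "n - \<rho> \<le> card {..<k}" unfolding k_def by simp
  have inj: "inj_on r C"
  proof (rule inj_onI)
    fix u v assume u: "u \<in> C" and v: "v \<in> C" and e: "r u = r v"
    have ag: "\<forall>i\<in>{..<k}. u i = v i"
    proof
      fix i assume i: "i \<in> {..<k}"
      have "r u i = r v i" using e by simp
      thus "u i = v i" using i unfolding r_def by simp
    qed
    show "u = v" by (rule mds_agree[OF md u v kK cK ag])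
  qed
  have sub: "r ` C \<subseteq> P" unfolding r_def P_def by (simp add: image_subset_iff)
  have "card (UNIV :: 'a set) > 0" by (simp add: card_gt_0_iff)
  hence "card C > 0" using cC by simp
  hence finC: "finite C" using card_ge_0_finite by blast
  have cP: "card P = card (UNIV :: 'a set) ^ k" unfolding P_def by (simp add: card_PiE)
  have "card (r ` C) = card P" using card_image[OF inj] cC cP unfolding k_def by simp
  moreover have "finite P" unfolding P_def by (simp add: finite_PiE)
  ultimately have eq: "r ` C = P" using sub card_subset_eq by blast
  have "restrict w {..<k} \<in> P" unfolding P_def by simp
  hence "restrict w {..<k} \<in> r ` C" using eq by simp
  then obtain c where c1: "restrict w {..<k} = r c" and c0: "c \<in> C" by (rule imageE)
  have c: "c \<in> C" "r c = restrict w {..<k}" using c0 c1 by simp_all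
  have "\<forall>i<n - \<rho>. c i = w i"
  proof (intro allI impI)
    fix i assume "i < n - \<rho>"
    hence i: "i \<in> {..<k}" unfolding k_def by simp
    have "r c i = restrict w {..<k} i" using c(2) by simp
    thus "c i = w i" using i unfolding r_def by simp
  qed
  thus ?thesis using c(1) by blast
qed

theorem theorem1:
  fixes n \<rho> :: nat and C :: "(nat \<Rightarrow> 'a::{field,finite}) set"
  assumes "0 < \<rho>" and "\<rho> < n" and "card (UNIV :: 'a set) \<ge> n - 1"
    and "mds_code n (n - \<rho>) (\<rho> + 1) C"
  shows "linear_graph_code n (code_G1 n \<rho> C)
       \<and> card (code_G1 n \<rho> C) = card (UNIV :: 'a set) ^ ((n - \<rho>)^2)
       \<and> node_erasure_correcting n \<rho> (code_G1 n \<rho> C)"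
proof -
  let ?k = "n - \<rho>"
  let ?G = "code_G1 n \<rho> C"
  have lcp: "lin_code_params n (n - \<rho>) (\<rho> + 1) C" using assms(4) unfolding mds_code_def by blast
  have lc: "linear_code n C" using lcp unfolding lin_code_params_def by blast
  have cC: "card C = card (UNIV :: 'a set) ^ ?k" using lcp unfolding lin_code_params_def by blast
  have md: "min_distance n C = \<rho> + 1" using lcp unfolding lin_code_params_def by blast
  have Cv: "c i = 0" if "c \<in> C" "n \<le> i" for c i
    using lc that unfolding linear_code_def vecs_def by blast
  have agr: "u = v" if "u \<in> C" "v \<in> C" "K \<subseteq> {..<n}" "?k \<le> card K" "\<forall>i\<in>K. u i = v i" for u v K
    by (rule mds_agree[OF md that])
  have ex: "\<exists>c\<in>C. \<forall>i<?k. c i = w i" for w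
    by (rule mds_surj[OF md cC assms(2)])
  have lin: "linear_graph_code n ?G"
  proof -
    have z: "(\<lambda>_. 0) \<in> C" and ad: "\<And>u v. u \<in> C \<Longrightarrow> v \<in> C \<Longrightarrow> (\<lambda>i. u i + v i) \<in> C"
      and sm: "\<And>a u. u \<in> C \<Longrightarrow> (\<lambda>i. a * u i) \<in> C"
      using lc unfolding linear_code_def by auto
    have g1: "?G \<subseteq> graphs n" unfolding code_G1_def by blast
    have g2: "(\<lambda>_ _. 0) \<in> ?G"
      unfolding code_G1_def graphs_def in_vec_def out_vec_def using z by simp
    have g3: "(\<lambda>i j. L1 i j + L2 i j) \<in> ?G" if "L1 \<in> ?G" "L2 \<in> ?G" for L1 L2
    proof -
      have a1: "L1 \<in> graphs n" "\<forall>m<n - \<rho>. (\<lambda>j. L1 j m) \<in> C" "\<forall>l<n. (\<lambda>j. L1 l j) \<in> C"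
        using that(1) unfolding code_G1_def in_vec_def out_vec_def by auto
      have a2: "L2 \<in> graphs n" "\<forall>m<n - \<rho>. (\<lambda>j. L2 j m) \<in> C" "\<forall>l<n. (\<lambda>j. L2 l j) \<in> C"
        using that(2) unfolding code_G1_def in_vec_def out_vec_def by auto
      have "(\<lambda>i j. L1 i j + L2 i j) \<in> graphs n" using a1(1) a2(1) unfolding graphs_def by simp
      moreover have "\<forall>m<n - \<rho>. (\<lambda>j. L1 j m + L2 j m) \<in> C"
      proof (intro allI impI)
        fix m assume "m < n - \<rho>"
        thus "(\<lambda>j. L1 j m + L2 j m) \<in> C" by (intro ad a1(2)[rule_format] a2(2)[rule_format])
      qed
      moreover have "\<forall>l<n. (\<lambda>j. L1 l j + L2 l j) \<in> C"
      proof (intro allI impI)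
        fix l assume "l < n"
        thus "(\<lambda>j. L1 l j + L2 l j) \<in> C" by (intro ad a1(3)[rule_format] a2(3)[rule_format])
      qed
      ultimately show ?thesis unfolding code_G1_def in_vec_def out_vec_def by simp
    qed
    have g4: "(\<lambda>i j. a * L i j) \<in> ?G" if "L \<in> ?G" for a L
    proof -
      have a1: "L \<in> graphs n" "\<forall>m<n - \<rho>. (\<lambda>j. L j m) \<in> C" "\<forall>l<n. (\<lambda>j. L l j) \<in> C"
        using that(1) unfolding code_G1_def in_vec_def out_vec_def by auto
      have "(\<lambda>i j. a * L i j) \<in> graphs n" using a1(1) unfolding graphs_def by simp
      moreover have "\<forall>m<n - \<rho>. (\<lambda>j. a * L j m) \<in> C"
      proof (intro allI impI)
        fix m assume "m < n - \<rho>"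
        thus "(\<lambda>j. a * L j m) \<in> C" by (intro sm a1(2)[rule_format])
      qed
      moreover have "\<forall>l<n. (\<lambda>j. a * L l j) \<in> C"
      proof (intro allI impI)
        fix l assume "l < n"
        thus "(\<lambda>j. a * L l j) \<in> C" by (intro sm a1(3)[rule_format])
      qed
      ultimately show ?thesis unfolding code_G1_def in_vec_def out_vec_def by simp
    qed
    have g3': "\<forall>L1\<in>?G. \<forall>L2\<in>?G. (\<lambda>i j. L1 i j + L2 i j) \<in> ?G"
    proof (intro ballI)
      fix L1 L2 assume "L1 \<in> ?G" "L2 \<in> ?G" thus "(\<lambda>i j. L1 i j + L2 i j) \<in> ?G" by (rule g3)
    qed
    have g4': "\<forall>a. \<forall>L\<in>?G. (\<lambda>i j. a * L i j) \<in> ?G"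
    proof (intro allI ballI)
      fix a L assume "L \<in> ?G" thus "(\<lambda>i j. a * L i j) \<in> ?G" by (rule g4)
    qed
    show ?thesis unfolding linear_graph_code_def by (intro conjI g1 g2 g3' g4')
  qed
  have Gunf: "L \<in> ?G \<longleftrightarrow> L \<in> graphs n \<and> (\<forall>m<?k. in_vec L m \<in> C) \<and> (\<forall>l<n. out_vec L l \<in> C)" for L
    unfolding code_G1_def by blast
  have kK: "{..<?k} \<subseteq> {..<n}" by auto
  have cK: "?k \<le> card {..<?k}" by (simp only: card_lessThan le_refl)
  have uniq: "L1 = L2" if L1: "L1 \<in> ?G" and L2: "L2 \<in> ?G" and bl: "\<forall>i<?k. \<forall>j<?k. L1 i j = L2 i j" for L1 L2
  proof -
    have cols: "L1 i m = L2 i m" if m: "m < ?k" for m i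
    proof -
      have c1: "in_vec L1 m \<in> C" using L1 m Gunf[of L1] by blast
      have c2: "in_vec L2 m \<in> C" using L2 m Gunf[of L2] by blast
      have ag: "\<forall>i\<in>{..<?k}. in_vec L1 m i = in_vec L2 m i"
        unfolding in_vec_def using bl m by blast
      have "in_vec L1 m = in_vec L2 m" by (rule agr[OF c1 c2 kK cK ag])
      thus ?thesis unfolding in_vec_def by (rule fun_cong)
    qed
    show "L1 = L2"
    proof (intro ext)
      fix l j
      show "L1 l j = L2 l j"
      proof (cases "l < n")
        case True
        have c1: "out_vec L1 l \<in> C" using L1 True Gunf[of L1] by blast
        have c2: "out_vec L2 l \<in> C" using L2 True Gunf[of L2] by blast
        have ag: "\<forall>i\<in>{..<?k}. out_vec L1 l i = out_vec L2 l i"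
          unfolding out_vec_def using cols by blast
        have "out_vec L1 l = out_vec L2 l" by (rule agr[OF c1 c2 kK cK ag])
        thus ?thesis unfolding out_vec_def by (rule fun_cong)
      next
        case False
        have "L1 \<in> graphs n" "L2 \<in> graphs n" using L1 L2 Gunf[of L1] Gunf[of L2] by blast+
        thus ?thesis using False unfolding graphs_def by simp
      qed
    qed
  qed
  let ?P = "PiE ({..<?k} \<times> {..<?k}) (\<lambda>_. UNIV :: 'a set)"
  let ?phi = "\<lambda>L. restrict (\<lambda>(i,j). L i j) ({..<?k} \<times> {..<?k})"
  have bij: "bij_betw ?phi ?G ?P"
  proof (rule bij_betwI')
    fix L1 L2 assume "L1 \<in> ?G" "L2 \<in> ?G"
    show "(?phi L1 = ?phi L2) = (L1 = L2)"
    proof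
      assume h: "?phi L1 = ?phi L2"
      have "\<forall>i<?k. \<forall>j<?k. L1 i j = L2 i j"
      proof (intro allI impI)
        fix i j assume "i < ?k" "j < ?k"
        hence "?phi L1 (i,j) = ?phi L2 (i,j)" using h by simp
        thus "L1 i j = L2 i j" using \<open>i < ?k\<close> \<open>j < ?k\<close> by simp
      qed
      thus "L1 = L2" by (rule uniq[OF \<open>L1 \<in> ?G\<close> \<open>L2 \<in> ?G\<close>])
    qed simp
  next
    fix L assume "L \<in> ?G" show "?phi L \<in> ?P" by simp
  next
    fix f assume f: "f \<in> ?P"
    define col where "col m = (SOME c. c \<in> C \<and> (\<forall>i<?k. c i = f (i,m)))" for m
    have col: "col m \<in> C \<and> (\<forall>i<?k. col m i = f (i,m))" for m
      proof -
      have "\<exists>c. c \<in> C \<and> (\<forall>i<?k. c i = f (i,m))" using ex[of "\<lambda>i. f (i,m)"] by blast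
      thus ?thesis unfolding col_def by (rule someI_ex)
    qed
    define row where "row l = (SOME c. c \<in> C \<and> (\<forall>j<?k. c j = col j l))" for l
    have row: "row l \<in> C \<and> (\<forall>j<?k. row l j = col j l)" for l
      proof -
      have "\<exists>c. c \<in> C \<and> (\<forall>j<?k. c j = col j l)" using ex[of "\<lambda>j. col j l"] by blast
      thus ?thesis unfolding row_def by (rule someI_ex)
    qed
    define L where "L l j = (if l < n then row l j else 0)" for l j
    have LG: "L \<in> graphs n" unfolding graphs_def mem_Collect_eq
    proof (intro allI impI)
      fix i j assume h: "\<not> (i < n \<and> j < n)"
      show "L i j = 0"
      proof (cases "i < n")
        case True
        hence "n \<le> j" using h by simp
        moreover have "row i \<in> C" using row by blast
        ultimately have "row i j = 0" using Cv by blast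
        thus ?thesis using True unfolding L_def by simp
      next
        case False thus ?thesis unfolding L_def by simp
      qed
    qed
    have incol: "in_vec L m = col m" if m: "m < ?k" for m
    proof
      fix i show "in_vec L m i = col m i"
      proof (cases "i < n")
        case True
        have "row i m = col m i" using row[of i] m by blast
        thus ?thesis using True unfolding in_vec_def L_def by simp
      next
        case False
        have "col m \<in> C" using col by blast
        hence "col m i = 0" using Cv False by simp
        thus ?thesis using False unfolding in_vec_def L_def by simp
      qed
    qed
    have outrow: "out_vec L l = row l" if "l < n" for l
      unfolding out_vec_def L_def using that by simp
    have c1: "\<forall>m < n - \<rho>. in_vec L m \<in> C"
    proof (intro allI impI)
      fix m assume "m < n - \<rho>" thus "in_vec L m \<in> C" using incol col by simp
    qed
    have c2: "\<forall>l < n. out_vec L l \<in> C"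
    proof (intro allI impI)
      fix l assume "l < n" thus "out_vec L l \<in> C" using outrow row by simp
    qed
    have LinG: "L \<in> ?G" unfolding code_G1_def using LG c1 c2 by blast
    have phiL: "?phi L = f"
    proof
      fix p show "?phi L p = f p"
      proof (cases "p \<in> {..<?k} \<times> {..<?k}")
        case True
        then obtain i j where p: "p = (i,j)" "i < ?k" "j < ?k" by auto
        have "i < n" using p by simp
        have e1: "row i j = col j i" using row[of i] p by blast
        have e2: "col j i = f (i,j)" using col[of j] p by blast
        have "?phi L p = L i j" using p by simp
        also have "\<dots> = f p" using \<open>i < n\<close> e1 e2 p unfolding L_def by simp
        finally show ?thesis .
      next
        case False thus ?thesis using f by (cases p) (auto simp: PiE_def extensional_def)
      qed
    qed
    show "\<exists>L\<in>?G. f = ?phi L" using phiL LinG by (intro bexI[of _ L]) simp_all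
  qed
  have "card ?G = card ?P" using bij by (rule bij_betw_same_card)
  also have "\<dots> = card (UNIV :: 'a set) ^ (?k^2)"
    by (simp add: card_PiE power2_eq_square)
  finally have cardG: "card ?G = card (UNIV :: 'a set) ^ (?k^2)" .
  have nec: "node_erasure_correcting n \<rho> ?G"
    unfolding node_erasure_correcting_def
  proof (intro allI impI ballI)
    fix S L1 L2 assume S: "S \<subseteq> {..<n} \<and> card S = \<rho>" and L1: "L1 \<in> ?G" and L2: "L2 \<in> ?G"
      and ag: "\<forall>i<n. \<forall>j<n. i \<notin> S \<and> j \<notin> S \<longrightarrow> L1 i j = L2 i j"
    let ?T = "{..<n} - S"
    have Ss: "S \<subseteq> {..<n}" and Sc: "card S = \<rho>" using S by auto
    have Sf: "finite S" using Ss finite_subset by blast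
    have cT: "card ?T = ?k" using card_Diff_subset[OF Sf Ss] Sc by simp
    have rows: "\<And>l. l < n \<Longrightarrow> l \<notin> S \<Longrightarrow> \<forall>j. L1 l j = L2 l j"
    proof -
      fix l assume "l < n" "l \<notin> S"
      hence "out_vec L1 l = out_vec L2 l"
        using L1 L2 ag cT by (intro agr[of _ _ ?T]) (auto simp: code_G1_def out_vec_def)
      thus "\<forall>j. L1 l j = L2 l j" unfolding out_vec_def by (simp add: fun_eq_iff)
    qed
    have cols: "\<And>m. m < ?k \<Longrightarrow> \<forall>i. L1 i m = L2 i m"
    proof -
      fix m assume m: "m < ?k"
      have "in_vec L1 m = in_vec L2 m"
        using L1 L2 m rows cT by (intro agr[of _ _ ?T]) (auto simp: code_G1_def in_vec_def)
      thus "\<forall>i. L1 i m = L2 i m" unfolding in_vec_def by (simp add: fun_eq_iff)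
    qed
    show "L1 = L2" using uniq[OF L1 L2] cols by blast
  qed
  show ?thesis using lin cardG nec by blast
qed

end
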